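(* Let $V$ be a real vector space with an inner product of signature $(p,q)$ where $p\ge q\ge2$. (1) If $p=q$, then there exists an algebraic curvature tensor $R$ on $V$ which has spacelike rank $4$ and timelike rank $4$, and which does not have constant mixed rank. (2) If $p>q$, then there exists an algebraic curvature tensor $R$ on $V$ which has spacelike rank $4$, and which does not have constant timelike rank and does not have mixed rank $4$.
   Context: An inner product of signature $(p,q)$ is a non-degenerate symmetric bilinear form $(\cdot,\cdot)$ whose maximal negative definite subspaces have dimension $p$ and maximal positive definite subspaces dimension $q$. A $2$-plane $\pi$ is spacelike (resp. timelike, mixed) if the induced form on $\pi$ has signature $(0,2)$ (resp. $(2,0)$, $(1,1)$). An algebraic curvature tensor is $R\in\otimes^4V^*$ with $R(x,y,z,w)=R(z,w,x,y)=-R(y,x,z,w)$ and $R(x,y,z,w)+R(y,z,x,w)+R(z,x,y,w)=0$; the operator $R(x,y)$ is defined by $R(x,y,z,w)=(R(x,y)z,w)$. For a non-degenerate $2$-plane $\pi$ with oriented basis $\{e_1,e_2\}$, $R(\pi):=|(e_1,e_1)(e_2,e_2)-(e_1,e_2)^2|^{-1/2}R(e_1,e_2)$. $R$ has spacelike rank $r$ if $\operatorname{rank}R(\pi)=r$ for every oriented spacelike $2$-plane $\pi$; timelike and mixed rank $r$ are defined analogously. Constant timelike (mixed) rank means timelike (mixed) rank $r$ for some $r$. *)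

theory Defs
  imports "HOL-Analysis.Analysis"
begin

text \<open>A finite-dimensional real vector space V is modelled by a type 'a of class
  euclidean_space; its built-in Euclidean inner product plays no role. The
  indefinite inner product is a separate form B.\<close>

definition sym_bilinear_form :: "('a::real_vector \<Rightarrow> 'a \<Rightarrow> real) \<Rightarrow> bool" where
  "sym_bilinear_form B \<longleftrightarrow> bilinear B \<and> (\<forall>x y. B x y = B y x)"

definition neg_def_subspace :: "('a::real_vector \<Rightarrow> 'a \<Rightarrow> real) \<Rightarrow> 'a set \<Rightarrow> bool" where
  "neg_def_subspace B N \<longleftrightarrow> subspace N \<and> (\<forall>x\<in>N. x \<noteq> 0 \<longrightarrow> B x x < 0)"

definition pos_def_subspace :: "('a::real_vector \<Rightarrow> 'a \<Rightarrow> real) \<Rightarrow> 'a set \<Rightarrow> bool" where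
  "pos_def_subspace B N \<longleftrightarrow> subspace N \<and> (\<forall>x\<in>N. x \<noteq> 0 \<longrightarrow> B x x > 0)"

definition signature_on ::
  "'a::euclidean_space set \<Rightarrow> ('a \<Rightarrow> 'a \<Rightarrow> real) \<Rightarrow> nat \<Rightarrow> nat \<Rightarrow> bool" where
  "signature_on W B p q \<longleftrightarrow>
     (\<forall>x\<in>W. (\<forall>y\<in>W. B x y = 0) \<longrightarrow> x = 0) \<and>
     (\<exists>N. N \<subseteq> W \<and> neg_def_subspace B N \<and> dim N = p) \<and>
     (\<forall>N. N \<subseteq> W \<and> neg_def_subspace B N \<longrightarrow> dim N \<le> p) \<and>
     (\<exists>P. P \<subseteq> W \<and> pos_def_subspace B P \<and> dim P = q) \<and>
     (\<forall>P. P \<subseteq> W \<and> pos_def_subspace B P \<longrightarrow> dim P \<le> q)"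

definition inner_product_sig :: "('a::euclidean_space \<Rightarrow> 'a \<Rightarrow> real) \<Rightarrow> nat \<Rightarrow> nat \<Rightarrow> bool" where
  "inner_product_sig B p q \<longleftrightarrow> sym_bilinear_form B \<and> signature_on UNIV B p q"

definition alg_curv_tensor :: "('a::real_vector \<Rightarrow> 'a \<Rightarrow> 'a \<Rightarrow> 'a \<Rightarrow> real) \<Rightarrow> bool" where
  "alg_curv_tensor R \<longleftrightarrow>
     (\<forall>y z w. linear (\<lambda>x. R x y z w)) \<and> (\<forall>x z w. linear (\<lambda>y. R x y z w)) \<and>
     (\<forall>x y w. linear (\<lambda>z. R x y z w)) \<and> (\<forall>x y z. linear (\<lambda>w. R x y z w)) \<and>
     (\<forall>x y z w. R x y z w = R z w x y) \<and>
     (\<forall>x y z w. R x y z w = - R y x z w) \<and>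
     (\<forall>x y z w. R x y z w + R y z x w + R z x y w = 0)"

definition curv_op ::
  "('a \<Rightarrow> 'a \<Rightarrow> real) \<Rightarrow> ('a \<Rightarrow> 'a \<Rightarrow> 'a \<Rightarrow> 'a \<Rightarrow> real) \<Rightarrow> 'a \<Rightarrow> 'a \<Rightarrow> 'a \<Rightarrow> 'a" where
  "curv_op B R x y z = (THE u. \<forall>w. B u w = R x y z w)"

definition plane_op ::
  "('a::real_vector \<Rightarrow> 'a \<Rightarrow> real) \<Rightarrow> ('a \<Rightarrow> 'a \<Rightarrow> 'a \<Rightarrow> 'a \<Rightarrow> real) \<Rightarrow> 'a \<Rightarrow> 'a \<Rightarrow> 'a \<Rightarrow> 'a" where
  "plane_op B R e1 e2 z =
     \<bar>B e1 e1 * B e2 e2 - (B e1 e2)^2\<bar> powr (-1/2) *\<^sub>R curv_op B R e1 e2 z"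

definition op_rank :: "('a::euclidean_space \<Rightarrow> 'a) \<Rightarrow> nat" where
  "op_rank f = dim (range f)"

definition plane_of_type ::
  "('a::euclidean_space \<Rightarrow> 'a \<Rightarrow> real) \<Rightarrow> nat \<Rightarrow> nat \<Rightarrow> 'a \<Rightarrow> 'a \<Rightarrow> bool" where
  "plane_of_type B a b e1 e2 \<longleftrightarrow>
     dim (span {e1, e2}) = 2 \<and> signature_on (span {e1, e2}) B a b"

definition rank_on_planes ::
  "('a::euclidean_space \<Rightarrow> 'a \<Rightarrow> real) \<Rightarrow> ('a \<Rightarrow> 'a \<Rightarrow> 'a \<Rightarrow> 'a \<Rightarrow> real) \<Rightarrow> nat \<Rightarrow> nat \<Rightarrow> nat \<Rightarrow> bool" where
  "rank_on_planes B R a b r \<longleftrightarrow>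
     (\<forall>e1 e2. plane_of_type B a b e1 e2 \<longrightarrow> op_rank (plane_op B R e1 e2) = r)"

definition spacelike_rank where "spacelike_rank B R r \<longleftrightarrow> rank_on_planes B R 0 2 r"
definition timelike_rank where "timelike_rank B R r \<longleftrightarrow> rank_on_planes B R 2 0 r"
definition mixed_rank where "mixed_rank B R r \<longleftrightarrow> rank_on_planes B R 1 1 r"

definition const_timelike_rank where "const_timelike_rank B R \<longleftrightarrow> (\<exists>r. timelike_rank B R r)"
definition const_mixed_rank where "const_mixed_rank B R \<longleftrightarrow> (\<exists>r. mixed_rank B R r)"

end

theory Submission
  imports Defs
begin

definition sbf :: "('a::real_vector \<Rightarrow> 'a \<Rightarrow> real) \<Rightarrow> bool" where
  "sbf C \<longleftrightarrow> (\<forall>x. linear (C x)) \<and> (\<forall>x y. C x y = C y x)"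

definition pdef :: "('a::real_vector \<Rightarrow> 'a \<Rightarrow> real) \<Rightarrow> 'a set \<Rightarrow> bool" where
  "pdef C S \<longleftrightarrow> subspace S \<and> (\<forall>x\<in>S. x \<noteq> 0 \<longrightarrow> C x x > 0)"

lemma sbf_lin2: "sbf C \<Longrightarrow> linear (C x)" by (simp add: sbf_def)
lemma sbf_sym: "sbf C \<Longrightarrow> C x y = C y x" by (simp add: sbf_def)
lemma sbf_lin1: "sbf C \<Longrightarrow> linear (\<lambda>x. C x y)"
  by (subst sbf_sym[of C], assumption) (rule sbf_lin2)

lemma sbf_simps:
  assumes "sbf C"
  shows "C x (y + z) = C x y + C x z" "C (y + z) x = C y x + C z x"
    "C x (r *\<^sub>R y) = r * C x y" "C (r *\<^sub>R y) x = r * C y x"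
    "C x (y - z) = C x y - C x z" "C (y - z) x = C y x - C z x"
    "C x (- y) = - C x y" "C (- y) x = - C y x"
    "C x 0 = 0" "C 0 x = 0"
    "C x (sum f A) = (\<Sum>a\<in>A. C x (f a))" "C (sum f A) x = (\<Sum>a\<in>A. C (f a) x)"
  using linear_add[OF sbf_lin2[OF assms]] linear_add[OF sbf_lin1[OF assms]]
    linear_scale[OF sbf_lin2[OF assms]] linear_scale[OF sbf_lin1[OF assms]]
    linear_diff[OF sbf_lin2[OF assms]] linear_diff[OF sbf_lin1[OF assms]]
    linear_neg[OF sbf_lin2[OF assms]] linear_neg[OF sbf_lin1[OF assms]]
    linear_0[OF sbf_lin2[OF assms]] linear_0[OF sbf_lin1[OF assms]]
    linear_sum[OF sbf_lin2[OF assms]] linear_sum[OF sbf_lin1[OF assms]]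
  by auto

lemma sbf_neg: "sbf C \<Longrightarrow> sbf (\<lambda>x y. - C x y)"
  unfolding sbf_def by (auto intro!: linearI simp: linear_add linear_scale)

lemma sbf_B: "sym_bilinear_form B \<Longrightarrow> sbf B"
  unfolding sym_bilinear_form_def sbf_def bilinear_def by auto

lemma orth_span:
  assumes "sbf C" "\<forall>s\<in>S. C a s = 0" "s \<in> span S"
  shows "C a s = 0"
proof -
  have "subspace {s. C a s = 0}"
    unfolding subspace_def using sbf_simps[OF assms(1)] by auto
  then have "span S \<subseteq> {s. C a s = 0}" using assms(2) by (intro span_minimal) auto
  then show ?thesis using assms(3) by auto
qed

lemma orthfam:
  fixes C :: "'a::euclidean_space \<Rightarrow> 'a \<Rightarrow> real"
  assumes "sbf C"
  shows "(\<forall>i<n. \<forall>j<n. i \<noteq> j \<longrightarrow> C (v i) (v j) = 0) \<Longrightarrow> (\<forall>i<n. C (v i) (v i) > 0)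
    \<Longrightarrow> pdef C (span (v ` {..<n})) \<and> dim (v ` {..<n}) = n"
proof (induction n)
  case 0
  have "dim ({}::'a set) = 0" using dim_eq_0 by blast
  then show ?case by (simp add: pdef_def)
next
  case (Suc n)
  let ?S = "v ` {..<n}"
  have IH: "pdef C (span ?S)" "dim ?S = n" using Suc by auto
  have orth: "\<forall>s\<in>?S. C (v n) s = 0" using Suc.prems(1) by auto
  have pos: "C (v n) (v n) > 0" using Suc.prems(2) by auto
  have eq: "v ` {..<Suc n} = insert (v n) ?S" by (auto simp: lessThan_Suc)
  have notin: "v n \<notin> span ?S" using orth_span[OF assms orth, of "v n"] pos by auto
  have "pdef C (span (insert (v n) ?S))"
    unfolding pdef_def
  proof (intro conjI ballI impI)
    show "subspace (span (insert (v n) ?S))" by simp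
    fix x assume x: "x \<in> span (insert (v n) ?S)" "x \<noteq> 0"
    then obtain k where k: "x - k *\<^sub>R v n \<in> span ?S" by (auto simp: span_insert)
    define s where "s = x - k *\<^sub>R v n"
    have xs: "x = s + k *\<^sub>R v n" by (simp add: s_def)
    have cs: "C (v n) s = 0" using orth_span[OF assms orth] k s_def by auto
    have cs': "C s (v n) = 0" using cs sbf_sym[OF assms] by metis
    have "C x x = C s s + k * k * C (v n) (v n)"
      unfolding xs using cs cs' by (simp add: sbf_simps[OF assms] algebra_simps)
    moreover have "C s s \<ge> 0" using IH(1) k s_def unfolding pdef_def
      by (cases "s = 0") (auto simp: sbf_simps[OF assms] less_imp_le)
    moreover have "k \<noteq> 0 \<or> s \<noteq> 0" using x(2) xs by auto
    moreover have "s \<noteq> 0 \<Longrightarrow> C s s > 0" using IH(1) k s_def unfolding pdef_def by auto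
    ultimately show "C x x > 0" using pos
    proof (cases "k = 0")
      case False
      then have "k * k > 0" by (metis not_real_square_gt_zero)
      then have "k * k * C (v n) (v n) > 0" using pos by simp
      then show ?thesis using \<open>C x x = C s s + k * k * C (v n) (v n)\<close> \<open>C s s \<ge> 0\<close> by linarith
    qed (use \<open>C x x = C s s + k * k * C (v n) (v n)\<close> \<open>k \<noteq> 0 \<or> s \<noteq> 0\<close> \<open>s \<noteq> 0 \<Longrightarrow> C s s > 0\<close> in auto)
  qed
  moreover have "dim (insert (v n) ?S) = Suc n" using notin IH(2) by (simp add: dim_insert)
  ultimately show ?case unfolding eq by simp
qed

lemma gram_schmidt_C:
  fixes C :: "'a::euclidean_space \<Rightarrow> 'a \<Rightarrow> real"
  assumes "sbf C"
  shows "pdef C S \<Longrightarrow> dim S = n \<Longrightarrow>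
    \<exists>v. (\<forall>i<n. v i \<in> S) \<and> (\<forall>i<n. \<forall>j<n. C (v i) (v j) = (if i = j then 1 else 0))"
proof (induction n arbitrary: S)
  case 0
  then show ?case by auto
next
  case (Suc n)
  have sub: "subspace S" using Suc.prems by (simp add: pdef_def)
  obtain x where x: "x \<in> S" "x \<noteq> 0" using Suc.prems(2) dim_eq_0[of S] by auto
  have cxx: "C x x > 0" using Suc.prems(1) x by (simp add: pdef_def)
  define e where "e = (1 / sqrt (C x x)) *\<^sub>R x"
  have e: "e \<in> S" unfolding e_def using x sub by (simp add: subspace_scale)
  have cee: "C e e = 1" unfolding e_def using cxx
    by (simp add: sbf_simps[OF assms] real_sqrt_mult[symmetric])
  define S' where "S' = {y \<in> S. C e y = 0}"
  have sub': "subspace S'" unfolding S'_def subspace_def using sub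
    by (auto simp: sbf_simps[OF assms] subspace_def)
  have pd': "pdef C S'" using Suc.prems(1) sub' unfolding pdef_def S'_def by auto
  have S'S: "S' \<subseteq> S" by (auto simp: S'_def)
  have spS': "span S' = S'" using sub' by (simp add: span_eq_iff)
  have eS': "e \<notin> span S'" unfolding spS' using cee by (auto simp: S'_def)
  have "S \<subseteq> span (insert e S')"
  proof
    fix y assume y: "y \<in> S"
    have "y - C e y *\<^sub>R e \<in> S'" unfolding S'_def using y e sub cee
      by (auto simp: sbf_simps[OF assms] subspace_diff subspace_scale)
    then show "y \<in> span (insert e S')" by (auto simp: span_insert intro: span_base)
  qed
  then have "dim S \<le> dim (insert e S')" using dim_mono by blast
  moreover have "dim (insert e S') \<le> dim S" using e S'S by (intro dim_subset) auto
  ultimately have "dim S' = n" using Suc.prems(2) eS' by (simp add: dim_insert)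
  then obtain v' where v': "\<forall>i<n. v' i \<in> S'" "\<forall>i<n. \<forall>j<n. C (v' i) (v' j) = (if i = j then 1 else 0)"
    using Suc.IH[OF pd'] by blast
  define v where "v = v'(n := e)"
  have ort: "\<forall>i<n. C e (v' i) = 0" "\<forall>i<n. C (v' i) e = 0"
    using v'(1) sbf_sym[of C e] assms by (auto simp: S'_def)
  show ?case
    apply (rule exI[of _ v])
    using v' ort cee e S'S by (auto simp: v_def less_Suc_eq)
qed

lemma sumC1:
  fixes k :: nat
  assumes "sbf C"
  shows "C w (\<Sum>j<k. d j *\<^sub>R f j) = (\<Sum>j<k. d j * C w (f j))"
    "C (\<Sum>j<k. d j *\<^sub>R f j) w = (\<Sum>j<k. d j * C (f j) w)"
  by (simp_all add: sbf_simps[OF assms])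

lemma sumC:
  fixes k :: nat
  assumes "sbf C" "\<forall>i<k. \<forall>j<k. C (e i) (f j) = (if i = j then l i else 0)"
  shows "C (\<Sum>i<k. c i *\<^sub>R e i) (\<Sum>j<k. d j *\<^sub>R f j) = (\<Sum>i<k. c i * d i * l i)"
proof -
  have "C (\<Sum>i<k. c i *\<^sub>R e i) (\<Sum>j<k. d j *\<^sub>R f j) = (\<Sum>i<k. c i * (\<Sum>j<k. d j * C (e i) (f j)))"
    unfolding sumC1(2)[OF assms(1)] unfolding sumC1(1)[OF assms(1)] by (simp add: sum_distrib_left)
  also have "\<dots> = (\<Sum>i<k. c i * d i * l i)"
  proof (rule sum.cong[OF refl])
    fix i assume i: "i \<in> {..<k}"
    have "(\<Sum>j<k. d j * C (e i) (f j)) = (\<Sum>j<k. if i = j then d j * l i else 0)"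
      using assms(2) i by (intro sum.cong) auto
    also have "\<dots> = d i * l i" using i by (subst sum.delta') simp_all
    finally show "c i * (\<Sum>j<k. d j * C (e i) (f j)) = c i * d i * l i" by simp
  qed
  finally show ?thesis .
qed

definition phiC :: "('a::real_vector \<Rightarrow> 'a \<Rightarrow> real) \<Rightarrow> (nat \<Rightarrow> 'a) \<Rightarrow> (nat \<Rightarrow> 'a) \<Rightarrow> nat \<Rightarrow> 'a \<Rightarrow> 'a" where
  "phiC C v a k w = (\<Sum>i<k. C w (v i) *\<^sub>R a i) + (\<Sum>i<k. C w (a i) *\<^sub>R v i)"

lemma key_ineq:
  fixes k :: nat
  assumes C: "sbf C"
    and vv: "\<forall>i<k. \<forall>j<k. C (v i) (v j) = (if i = j then 1 else 0)"
    and aa: "\<forall>i<k. \<forall>j<k. C (a i) (a j) = (if i = j then -1 else 0)"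
    and va: "\<forall>i<k. \<forall>j<k. C (v i) (a j) = 0"
    and mx: "\<forall>u. (\<forall>i<k. C u (v i) = 0) \<longrightarrow> C u u \<le> 0"
  shows "C (phiC C v a k w) (phiC C v a k w) \<le> - C w w"
proof -
  define b where "b i = C w (v i)" for i
  define al where "al i = C w (a i)" for i
  define P where "P = (\<Sum>i<k. b i *\<^sub>R v i)"
  define A where "A = (\<Sum>i<k. al i *\<^sub>R a i)"
  define sb where "sb = (\<Sum>i<k. b i * b i)"
  define sa where "sa = (\<Sum>i<k. al i * al i)"
  have av: "\<forall>i<k. \<forall>j<k. C (a i) (v j) = (if i = j then 0 else 0)"
    using va by (metis sbf_sym[OF C])
  have va': "\<forall>i<k. \<forall>j<k. C (v i) (a j) = (if i = j then 0 else 0)" using va by simp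
  have PP: "C P P = sb" unfolding P_def sb_def using sumC[OF C vv] by simp
  have AA: "C A A = - sa" unfolding A_def sa_def using sumC[OF C aa]
    by (simp add: sum_negf)
  have PA: "C P A = 0" unfolding P_def A_def using sumC[OF C va'] by simp
  have AP: "C A P = 0" using PA sbf_sym[OF C] by metis
  have wP1: "C w P = sb" unfolding P_def sb_def b_def by (simp add: sumC1[OF C])
  have wP: "C w P = sb" "C P w = sb" using wP1 by (metis sbf_sym[OF C])+
  have wA1: "C w A = sa" unfolding A_def sa_def al_def by (simp add: sumC1[OF C])
  have wA: "C w A = sa" "C A w = sa" using wA1 by (metis sbf_sym[OF C])+
  define u where "u = w - P + A"
  have "\<forall>j<k. C u (v j) = 0"
  proof (intro allI impI)
    fix j assume j: "j < k"
    have "C P (v j) = (\<Sum>i<k. b i * C (v i) (v j))" unfolding P_def by (simp add: sumC1[OF C])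
    also have "\<dots> = (\<Sum>i<k. if i = j then b i else 0)" using vv j by (intro sum.cong) auto
    also have "\<dots> = b j" using j by (simp add: sum.delta')
    finally have 1: "C P (v j) = b j" .
    have "C A (v j) = (\<Sum>i<k. al i * C (a i) (v j))" unfolding A_def by (simp add: sumC1[OF C])
    also have "\<dots> = 0" using av j by (intro sum.neutral) auto
    finally have 2: "C A (v j) = 0" .
    show "C u (v j) = 0" unfolding u_def using 1 2 by (simp add: sbf_simps[OF C] b_def)
  qed
  then have uu: "C u u \<le> 0" using mx by blast
  have "C u u = C w w - sb + sa"
    unfolding u_def sbf_simps(1,2,5,6)[OF C] PP AA PA AP wP wA by simp
  moreover have "phiC C v a k w = (\<Sum>i<k. b i *\<^sub>R a i) + (\<Sum>i<k. al i *\<^sub>R v i)"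
    by (simp add: phiC_def b_def al_def)
  moreover have "C ((\<Sum>i<k. b i *\<^sub>R a i) + (\<Sum>i<k. al i *\<^sub>R v i)) ((\<Sum>i<k. b i *\<^sub>R a i) + (\<Sum>i<k. al i *\<^sub>R v i)) = - sb + sa"
  proof -
    have 1: "C (\<Sum>i<k. b i *\<^sub>R a i) (\<Sum>i<k. b i *\<^sub>R a i) = - sb"
      using sumC[OF C aa, of b b] by (simp add: sb_def sum_negf)
    have 2: "C (\<Sum>i<k. al i *\<^sub>R v i) (\<Sum>i<k. al i *\<^sub>R v i) = sa"
      using sumC[OF C vv, of al al] by (simp add: sa_def)
    have 3: "C (\<Sum>i<k. al i *\<^sub>R v i) (\<Sum>i<k. b i *\<^sub>R a i) = 0"
      using sumC[OF C va', of al b] by simp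
    have 4: "C (\<Sum>i<k. b i *\<^sub>R a i) (\<Sum>i<k. al i *\<^sub>R v i) = 0"
      using sumC[OF C av, of b al] by simp
    show ?thesis unfolding sbf_simps(1,2)[OF C] 1 2 3 4 by simp
  qed
  ultimately show ?thesis using uu by simp
qed

lemma span1_mem: "z \<in> span {c} \<Longrightarrow> \<exists>t. z = t *\<^sub>R c"
  by (auto simp: span_insert)

lemma span2_mem: "z \<in> span {b, c} \<Longrightarrow> \<exists>s t. z = s *\<^sub>R b + t *\<^sub>R c"
  by (auto simp: span_insert) (metis add.commute diff_add_cancel)

lemma span3_mem: "z \<in> span {a, b, c} \<Longrightarrow> \<exists>r s t. z = r *\<^sub>R a + s *\<^sub>R b + t *\<^sub>R c"
  by (auto simp: span_insert) (metis add.commute add.assoc diff_add_cancel)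

definition indep4 :: "'a::real_vector \<Rightarrow> 'a \<Rightarrow> 'a \<Rightarrow> 'a \<Rightarrow> bool" where
  "indep4 x y u v \<longleftrightarrow> (\<forall>a b c d. a *\<^sub>R x + b *\<^sub>R y + c *\<^sub>R u + d *\<^sub>R v = 0 \<longrightarrow> a = 0 \<and> b = 0 \<and> c = 0 \<and> d = 0)"

lemma indep4_notin:
  assumes "indep4 x y u v"
  shows "x \<notin> span {y, u, v}" "y \<notin> span {x, u, v}" "u \<notin> span {x, y, v}" "v \<notin> span {x, y, u}"
    "y \<notin> span {u, v}" "u \<notin> span {v}" "v \<noteq> 0"
proof -
  note I = assms[unfolded indep4_def, rule_format]
  show "x \<notin> span {y, u, v}"
  proof
    assume "x \<in> span {y, u, v}"
    then obtain r s t where "x = r *\<^sub>R y + s *\<^sub>R u + t *\<^sub>R v" using span3_mem by blast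
    then have "1 *\<^sub>R x + (-r) *\<^sub>R y + (-s) *\<^sub>R u + (-t) *\<^sub>R v = 0" by (simp add: algebra_simps)
    then show False using I by fastforce
  qed
  show "y \<notin> span {x, u, v}"
  proof
    assume "y \<in> span {x, u, v}"
    then obtain r s t where "y = r *\<^sub>R x + s *\<^sub>R u + t *\<^sub>R v" using span3_mem by blast
    then have "(-r) *\<^sub>R x + 1 *\<^sub>R y + (-s) *\<^sub>R u + (-t) *\<^sub>R v = 0" by (simp add: algebra_simps)
    then show False using I by fastforce
  qed
  show "u \<notin> span {x, y, v}"
  proof
    assume "u \<in> span {x, y, v}"
    then obtain r s t where "u = r *\<^sub>R x + s *\<^sub>R y + t *\<^sub>R v" using span3_mem by blast
    then have "(-r) *\<^sub>R x + (-s) *\<^sub>R y + 1 *\<^sub>R u + (-t) *\<^sub>R v = 0" by (simp add: algebra_simps)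
    then show False using I by fastforce
  qed
  show "v \<notin> span {x, y, u}"
  proof
    assume "v \<in> span {x, y, u}"
    then obtain r s t where "v = r *\<^sub>R x + s *\<^sub>R y + t *\<^sub>R u" using span3_mem by blast
    then have "(-r) *\<^sub>R x + (-s) *\<^sub>R y + (-t) *\<^sub>R u + 1 *\<^sub>R v = 0" by (simp add: algebra_simps)
    then show False using I by fastforce
  qed
  show "y \<notin> span {u, v}"
  proof
    assume "y \<in> span {u, v}"
    then obtain s t where "y = s *\<^sub>R u + t *\<^sub>R v" using span2_mem by blast
    then have "0 *\<^sub>R x + 1 *\<^sub>R y + (-s) *\<^sub>R u + (-t) *\<^sub>R v = 0" by (simp add: algebra_simps)
    then show False using I by fastforce
  qed
  show "u \<notin> span {v}"
  proof
    assume "u \<in> span {v}"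
    then obtain t where "u = t *\<^sub>R v" using span1_mem by blast
    then have "0 *\<^sub>R x + 0 *\<^sub>R y + 1 *\<^sub>R u + (-t) *\<^sub>R v = 0" by (simp add: algebra_simps)
    then show False using I by fastforce
  qed
  show "v \<noteq> 0"
  proof
    assume "v = 0"
    then have "0 *\<^sub>R x + 0 *\<^sub>R y + 0 *\<^sub>R u + 1 *\<^sub>R v = 0" by simp
    then show False using I by fastforce
  qed
qed

lemma indep4_dim:
  fixes x :: "'a::euclidean_space"
  assumes "indep4 x y u v"
  shows "dim {x, y, u, v} = 4"
proof -
  note N = indep4_notin[OF assms]
  have "dim {v} = 1" using N(7) by simp
  then have "dim {u, v} = 2" using N(6) by (simp add: dim_insert)
  then have "dim {y, u, v} = 3" using N(5) by (simp add: dim_insert)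
  then show ?thesis using N(1) by (simp add: dim_insert)
qed

lemma euclid_dual:
  fixes u :: "'a::euclidean_space"
  assumes "u \<notin> span T"
  shows "\<exists>z. inner u z = 1 \<and> (\<forall>t\<in>T. inner t z = 0)"
proof -
  obtain y z0 where y: "y \<in> span T" and z0: "\<And>w. w \<in> span T \<Longrightarrow> orthogonal z0 w" and u: "u = y + z0"
    using orthogonal_subspace_decomp_exists[of T u] by blast
  have "z0 \<noteq> 0" using assms y u by auto
  then have nz: "inner z0 z0 > 0" by simp
  have yz: "inner y z0 = 0" using z0[OF y] unfolding orthogonal_def by (simp add: inner_commute)
  have "inner u z0 = inner y z0 + inner z0 z0" unfolding u by (simp add: inner_add_left)
  then have "inner u z0 = inner z0 z0" using yz by simp
  moreover have "\<forall>t\<in>T. inner t z0 = 0" using z0 span_base unfolding orthogonal_def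
    by (metis inner_commute)
  ultimately show ?thesis using nz
    by (intro exI[of _ "(1 / inner z0 z0) *\<^sub>R z0"]) auto
qed

lemma B_dual:
  fixes B :: "'a::euclidean_space \<Rightarrow> 'a \<Rightarrow> real"
  assumes B: "sbf B" and nd: "\<forall>x. (\<forall>y. B x y = 0) \<longrightarrow> x = 0" and x: "x \<notin> span W"
  shows "\<exists>z. B x z = 1 \<and> (\<forall>w\<in>W. B w z = 0)"
proof -
  define D where "D w = (\<Sum>b\<in>Basis. B w b *\<^sub>R b)" for w
  have DB: "inner (D w) z = B w z" for w z
  proof -
    have "B w z = B w (\<Sum>b\<in>Basis. inner z b *\<^sub>R b)" by (simp add: euclidean_representation)
    also have "\<dots> = (\<Sum>b\<in>Basis. inner z b * B w b)" by (simp add: sbf_simps[OF B])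
    also have "\<dots> = (\<Sum>b\<in>Basis. B w b * inner b z)" by (simp add: inner_commute mult.commute)
    also have "\<dots> = inner (D w) z" unfolding D_def by (simp add: inner_sum_left)
    finally show ?thesis by simp
  qed
  have lD: "linear D"
    by (rule linearI) (simp_all add: D_def sbf_simps[OF B] scaleR_add_left sum.distrib scaleR_sum_right)
  have injD: "D a = D b \<Longrightarrow> a = b" for a b
  proof -
    assume "D a = D b"
    then have "\<forall>z. B (a - b) z = 0" using DB by (metis sbf_simps(6)[OF B] diff_self)
    then show "a = b" using nd by auto
  qed
  have "D x \<notin> span (D ` W)"
  proof
    assume "D x \<in> span (D ` W)"
    then have "D x \<in> D ` span W" using span_linear_image[OF lD] by simp
    then obtain y where "y \<in> span W" "D x = D y" by auto
    then show False using injD x by auto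
  qed
  then obtain z where "inner (D x) z = 1" "\<forall>t\<in>D ` W. inner t z = 0" using euclid_dual by blast
  then show ?thesis using DB by auto
qed

definition Rt :: "('a::real_vector \<Rightarrow> 'a \<Rightarrow> real) \<Rightarrow> ('a \<Rightarrow> 'a) \<Rightarrow> 'a \<Rightarrow> 'a \<Rightarrow> 'a \<Rightarrow> 'a \<Rightarrow> real" where
  "Rt B f x y z w = B y z * B x w - B x z * B y w + B (f y) z * B (f x) w - B (f x) z * B (f y) w"

lemma Rt_acs:
  assumes B: "sbf B" and lf: "linear f" and sa: "\<forall>x y. B (f x) y = B x (f y)"
  shows "alg_curv_tensor (Rt B f)"
proof -
  have S: "B (f x) y = B (f y) x" for x y using sa sbf_sym[OF B] by metis
  have Bs: "B x y = B y x" for x y using sbf_sym[OF B] by metis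
  note simps = sbf_simps[OF B] linear_add[OF lf] linear_scale[OF lf]
  show ?thesis unfolding alg_curv_tensor_def
  proof (intro conjI allI)
    fix y z w show "linear (\<lambda>x. Rt B f x y z w)"
      by (rule linearI) (simp_all add: Rt_def simps algebra_simps)
  next
    fix x z w show "linear (\<lambda>y. Rt B f x y z w)"
      by (rule linearI) (simp_all add: Rt_def simps algebra_simps)
  next
    fix x y w show "linear (\<lambda>z. Rt B f x y z w)"
      by (rule linearI) (simp_all add: Rt_def simps algebra_simps)
  next
    fix x y z show "linear (\<lambda>w. Rt B f x y z w)"
      by (rule linearI) (simp_all add: Rt_def simps algebra_simps)
  next
    fix x y z w show "Rt B f x y z w = Rt B f z w x y"
      unfolding Rt_def Bs[of w x] Bs[of z y] Bs[of z x] Bs[of w y] S[of w x] S[of z y] S[of z x] S[of w y]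
      by (simp add: algebra_simps)
  next
    fix x y z w show "Rt B f x y z w = - Rt B f y x z w"
      unfolding Rt_def by (simp add: algebra_simps)
  next
    fix x y z w show "Rt B f x y z w + Rt B f y z x w + Rt B f z x y w = 0"
      unfolding Rt_def Bs[of z x] Bs[of y x] Bs[of z y] S[of z x] S[of y x] S[of z y]
      by (simp add: algebra_simps)
  qed
qed

lemma curv_Rt:
  assumes B: "sbf B" and nd: "\<forall>x. (\<forall>y. B x y = 0) \<longrightarrow> x = 0"
  shows "curv_op B (Rt B f) x y z = B y z *\<^sub>R x - B x z *\<^sub>R y + B (f y) z *\<^sub>R f x - B (f x) z *\<^sub>R f y"
  unfolding curv_op_def
proof (rule the_equality)
  show "\<forall>w. B (B y z *\<^sub>R x - B x z *\<^sub>R y + B (f y) z *\<^sub>R f x - B (f x) z *\<^sub>R f y) w = Rt B f x y z w"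
    by (simp add: sbf_simps[OF B] Rt_def)
next
  fix u assume u: "\<forall>w. B u w = Rt B f x y z w"
  let ?u0 = "B y z *\<^sub>R x - B x z *\<^sub>R y + B (f y) z *\<^sub>R f x - B (f x) z *\<^sub>R f y"
  have "\<forall>w. B (u - ?u0) w = 0" using u by (simp add: sbf_simps[OF B] Rt_def)
  then have "u - ?u0 = 0" using nd by blast
  then show "u = ?u0" by simp
qed

lemma range_sub:
  "range (\<lambda>z. c *\<^sub>R (B y z *\<^sub>R x - B x z *\<^sub>R y + B (f y) z *\<^sub>R f x - B (f x) z *\<^sub>R f y))
    \<subseteq> span {x, y, f x, f y}"
  by (rule image_subsetI, intro span_scale span_add span_diff span_base) auto

lemma card3: "card {a, b, c} \<le> 3"
  by (simp add: card_insert_if)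

lemma dim3: "dim {a, b, c::'a::euclidean_space} \<le> 3"
  using dim_le_card'[of "{a, b, c}"] card3[of a b c] by simp

lemma rank_le3:
  fixes x :: "'a::euclidean_space"
  assumes "f x \<in> span {x, y, f y} \<or> f y \<in> span {x, y, f x}"
  shows "dim (range (\<lambda>z. c *\<^sub>R (B y z *\<^sub>R x - B x z *\<^sub>R y + B (f y) z *\<^sub>R f x - B (f x) z *\<^sub>R f y))) \<le> 3"
proof -
  have "span {x, y, f x, f y} = span {x, y, f y} \<or> span {x, y, f x, f y} = span {x, y, f x}"
  proof (cases "f x \<in> span {x, y, f y}")
    case True
    have "{x, y, f x, f y} = insert (f x) {x, y, f y}" by auto
    then show ?thesis using span_redundant[OF True] by simp
  next
    case False
    then have T: "f y \<in> span {x, y, f x}" using assms by auto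
    have "{x, y, f x, f y} = insert (f y) {x, y, f x}" by auto
    then show ?thesis using span_redundant[OF T] by simp
  qed
  then have "dim (span {x, y, f x, f y}) \<le> 3"
    using dim3[of x y "f y"] dim3[of x y "f x"] by (metis dim_span)
  moreover have "dim (range (\<lambda>z. c *\<^sub>R (B y z *\<^sub>R x - B x z *\<^sub>R y + B (f y) z *\<^sub>R f x - B (f x) z *\<^sub>R f y)))
     \<le> dim (span {x, y, f x, f y})"
    using range_sub by (intro dim_subset) 
  ultimately show ?thesis by linarith
qed

lemma rank_eq4:
  fixes B :: "'a::euclidean_space \<Rightarrow> 'a \<Rightarrow> real"
  assumes B: "sbf B" and nd: "\<forall>x. (\<forall>y. B x y = 0) \<longrightarrow> x = 0" and c: "c \<noteq> 0"
    and I: "indep4 x y (f x) (f y)"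
  shows "dim (range (\<lambda>z. c *\<^sub>R (B y z *\<^sub>R x - B x z *\<^sub>R y + B (f y) z *\<^sub>R f x - B (f x) z *\<^sub>R f y))) = 4"
proof -
  let ?F = "\<lambda>z. c *\<^sub>R (B y z *\<^sub>R x - B x z *\<^sub>R y + B (f y) z *\<^sub>R f x - B (f x) z *\<^sub>R f y)"
  note N = indep4_notin[OF I]
  note simps = sbf_simps[OF B]
  obtain z1 where z1: "B y z1 = 1" "\<forall>w\<in>{x, f x, f y}. B w z1 = 0" using B_dual[OF B nd N(2)] by blast
  obtain z2 where z2: "B x z2 = 1" "\<forall>w\<in>{y, f x, f y}. B w z2 = 0" using B_dual[OF B nd N(1)] by blast
  obtain z3 where z3: "B (f y) z3 = 1" "\<forall>w\<in>{x, y, f x}. B w z3 = 0" using B_dual[OF B nd N(4)] by blast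
  obtain z4 where z4: "B (f x) z4 = 1" "\<forall>w\<in>{x, y, f y}. B w z4 = 0" using B_dual[OF B nd N(3)] by blast
  have "x = ?F ((1/c) *\<^sub>R z1)" using z1 c by (simp add: simps)
  moreover have "y = ?F ((-1/c) *\<^sub>R z2)" using z2 c by (simp add: simps)
  moreover have "f x = ?F ((1/c) *\<^sub>R z3)" using z3 c by (simp add: simps)
  moreover have "f y = ?F ((-1/c) *\<^sub>R z4)" using z4 c by (simp add: simps)
  ultimately have sub: "{x, y, f x, f y} \<subseteq> range ?F" by blast
  have "4 = dim {x, y, f x, f y}" using indep4_dim[OF I] by simp
  also have "\<dots> \<le> dim (range ?F)" using sub by (rule dim_subset)
  finally have "4 \<le> dim (range ?F)" .
  moreover have "dim (range ?F) \<le> dim {x, y, f x, f y}"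
    using range_sub[of c B y x f] dim_mono by blast
  ultimately show ?thesis using indep4_dim[OF I] by simp
qed

lemma dim2_facts:
  fixes x :: "'a::euclidean_space"
  assumes "dim (span {x, y}) = 2"
  shows "x \<notin> span {y}" "y \<noteq> 0"
proof -
  have d: "dim {x, y} = 2" using assms by simp
  show "y \<noteq> 0"
  proof
    assume "y = 0"
    then have "dim {x, y} = dim {x}" by (simp add: dim_insert span_zero)
    then show False using d by (simp split: if_splits)
  qed
  show "x \<notin> span {y}"
  proof
    assume "x \<in> span {y}"
    then have "dim {x, y} = dim {y}" by (simp add: dim_insert)
    then show False using d by (simp split: if_splits)
  qed
qed

lemma coef2:
  fixes x :: "'a::euclidean_space"
  assumes "dim (span {x, y}) = 2" "a *\<^sub>R x + b *\<^sub>R y = 0"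
  shows "a = 0 \<and> b = 0"
proof -
  note F = dim2_facts[OF assms(1)]
  have a: "a = 0"
  proof (rule ccontr)
    assume "a \<noteq> 0"
    have ax: "a *\<^sub>R x = - (b *\<^sub>R y)" using assms(2) by (simp add: eq_neg_iff_add_eq_0)
    have "x = (1 / a) *\<^sub>R (a *\<^sub>R x)" using \<open>a \<noteq> 0\<close> by simp
    then have "x = (- b / a) *\<^sub>R y" unfolding ax by simp
    then have "x \<in> span {y}" by (simp add: span_base span_scale span_neg)
    then show False using F by simp
  qed
  then have "b *\<^sub>R y = 0" using assms(2) by simp
  then show ?thesis using a F by simp
qed

lemma plane_def_pos:
  fixes B :: "'a::euclidean_space \<Rightarrow> 'a \<Rightarrow> real"
  assumes "plane_of_type B 0 2 e1 e2"
  shows "\<forall>w\<in>span {e1, e2}. w \<noteq> 0 \<longrightarrow> B w w > 0"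
proof -
  obtain P where P: "P \<subseteq> span {e1, e2}" "pos_def_subspace B P" "dim P = 2"
    using assms unfolding plane_of_type_def signature_on_def by blast
  have "span P = span (span {e1, e2})"
    using P assms unfolding plane_of_type_def by (intro dim_eq_span) auto
  moreover have "span P = P" using P(2) unfolding pos_def_subspace_def by (simp add: span_eq_iff)
  ultimately have "P = span {e1, e2}" by simp
  then show ?thesis using P(2) unfolding pos_def_subspace_def by auto
qed

lemma plane_def_neg:
  fixes B :: "'a::euclidean_space \<Rightarrow> 'a \<Rightarrow> real"
  assumes "plane_of_type B 2 0 e1 e2"
  shows "\<forall>w\<in>span {e1, e2}. w \<noteq> 0 \<longrightarrow> B w w < 0"
proof -
  obtain P where P: "P \<subseteq> span {e1, e2}" "neg_def_subspace B P" "dim P = 2"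
    using assms unfolding plane_of_type_def signature_on_def by blast
  have "span P = span (span {e1, e2})"
    using P assms unfolding plane_of_type_def by (intro dim_eq_span) auto
  moreover have "span P = P" using P(2) unfolding neg_def_subspace_def by (simp add: span_eq_iff)
  ultimately have "P = span {e1, e2}" by simp
  then show ?thesis using P(2) unfolding neg_def_subspace_def by auto
qed

lemma plane_det:
  fixes B :: "'a::euclidean_space \<Rightarrow> 'a \<Rightarrow> real"
  assumes B: "sbf B" and pl: "plane_of_type B a b e1 e2"
  shows "B e1 e1 * B e2 e2 - (B e1 e2)^2 \<noteq> 0"
proof
  assume det: "B e1 e1 * B e2 e2 - (B e1 e2)^2 = 0"
  have d2: "dim (span {e1, e2}) = 2" using pl by (simp add: plane_of_type_def)
  have nd: "\<forall>x\<in>span {e1, e2}. (\<forall>y\<in>span {e1, e2}. B x y = 0) \<longrightarrow> x = 0"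
    using pl by (simp add: plane_of_type_def signature_on_def)
  have rad: "w = 0" if w: "w \<in> span {e1, e2}" "B w e1 = 0" "B w e2 = 0" for w
  proof -
    have "\<forall>y\<in>span {e1, e2}. B w y = 0"
    proof
      fix y assume "y \<in> span {e1, e2}"
      then obtain s t where "y = s *\<^sub>R e1 + t *\<^sub>R e2" using span2_mem by blast
      then show "B w y = 0" using w by (simp add: sbf_simps[OF B])
    qed
    then show ?thesis using nd w(1) by blast
  qed
  show False
  proof (cases "B e1 e1 = 0")
    case True
    then have "B e1 e2 = 0" using det by simp
    then have "e1 = 0" using rad[of e1] True by (simp add: span_base)
    then have "1 *\<^sub>R e1 + 0 *\<^sub>R e2 = 0" by simp
    then show False using coef2[OF d2, of 1 0] by simp
  next
    case False
    define w where "w = B e1 e2 *\<^sub>R e1 - B e1 e1 *\<^sub>R e2"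
    have "w \<in> span {e1, e2}" unfolding w_def by (intro span_diff span_scale span_base) auto
    moreover have "B w e1 = 0" unfolding w_def by (simp add: sbf_simps[OF B] sbf_sym[OF B, of e2 e1])
    moreover have "B w e2 = 0" unfolding w_def using det
      by (simp add: sbf_simps[OF B] power2_eq_square)
    ultimately have "w = 0" using rad by blast
    then have "B e1 e2 *\<^sub>R e1 + (- B e1 e1) *\<^sub>R e2 = 0" unfolding w_def by simp
    then show False using coef2[OF d2, of "B e1 e2" "- B e1 e1"] False by simp
  qed
qed

lemma sub_dim_le1:
  fixes e1 :: "'a::euclidean_space"
  assumes "subspace N" "N \<subseteq> span {e1, e2}" "dim (span {e1, e2}) = 2" "e \<in> span {e1, e2}" "e \<notin> N"
  shows "dim N \<le> 1"
proof (rule ccontr)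
  assume "\<not> dim N \<le> 1"
  then have "dim (span {e1, e2}) \<le> dim N" using assms(3) by simp
  then have "span N = span (span {e1, e2})" using assms(2) by (intro dim_eq_span) auto
  then have "e \<in> span N" using assms(4) by (simp add: span_span)
  moreover have "span N = N" using assms(1) by (simp add: span_eq_iff)
  ultimately show False using assms(5) by simp
qed

lemma ortho_plane_common:
  fixes B :: "'a::euclidean_space \<Rightarrow> 'a \<Rightarrow> real"
  assumes B: "sbf B" and o: "B e1 e2 = 0" and g1: "B e1 e1 \<noteq> 0" and g2: "B e2 e2 \<noteq> 0"
  shows "dim (span {e1, e2}) = 2"
    "\<forall>x\<in>span {e1, e2}. (\<forall>y\<in>span {e1, e2}. B x y = 0) \<longrightarrow> x = 0"
    "\<And>w. w \<in> span {e1, e2} \<Longrightarrow> \<exists>s t. w = s *\<^sub>R e1 + t *\<^sub>R e2 \<and> B w w = s * s * B e1 e1 + t * t * B e2 e2"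
    "e1 \<noteq> 0" "e2 \<noteq> 0"
proof -
  note simps = sbf_simps[OF B]
  have o': "B e2 e1 = 0" using o sbf_sym[OF B] by metis
  show n1: "e1 \<noteq> 0" using g1 by (auto simp: simps)
  show n2: "e2 \<noteq> 0" using g2 by (auto simp: simps)
  have "e1 \<notin> span {e2}"
  proof
    assume "e1 \<in> span {e2}"
    then obtain t where "e1 = t *\<^sub>R e2" using span1_mem by blast
    then have "B e1 e1 = t * B e1 e2" by (metis simps(3))
    then show False using g1 o by simp
  qed
  then show "dim (span {e1, e2}) = 2" using n2 by (simp add: dim_insert)
  show rep: "\<exists>s t. w = s *\<^sub>R e1 + t *\<^sub>R e2 \<and> B w w = s * s * B e1 e1 + t * t * B e2 e2"
    if wS: "w \<in> span {e1, e2}" for w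
  proof -
    obtain s t where w: "w = s *\<^sub>R e1 + t *\<^sub>R e2" using span2_mem[OF wS] by blast
    have "B w w = s * s * B e1 e1 + t * t * B e2 e2" unfolding w using o o' by (simp add: simps algebra_simps)
    then show ?thesis using w by blast
  qed
  show "\<forall>x\<in>span {e1, e2}. (\<forall>y\<in>span {e1, e2}. B x y = 0) \<longrightarrow> x = 0"
  proof (intro ballI impI)
    fix x assume x: "x \<in> span {e1, e2}" "\<forall>y\<in>span {e1, e2}. B x y = 0"
    obtain s t where w: "x = s *\<^sub>R e1 + t *\<^sub>R e2" using span2_mem[OF x(1)] by blast
    have "B x e1 = 0" "B x e2 = 0" using x(2) by (auto intro: span_base)
    then have "s * B e1 e1 = 0" "t * B e2 e2 = 0" unfolding w using o o' by (simp_all add: simps)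
    then show "x = 0" using g1 g2 w by simp
  qed
qed

lemma sq_neg: "(s::real) \<noteq> 0 \<Longrightarrow> g < 0 \<Longrightarrow> s * s * g < 0"
proof -
  assume "s \<noteq> 0" "g < 0"
  then have "s * s > 0" by (metis not_real_square_gt_zero)
  then show ?thesis using \<open>g < 0\<close> by (simp add: mult_pos_neg)
qed

lemma sq_pos: "(s::real) \<noteq> 0 \<Longrightarrow> g > 0 \<Longrightarrow> s * s * g > 0"
proof -
  assume "s \<noteq> 0" "g > 0"
  then have "s * s > 0" by (metis not_real_square_gt_zero)
  then show ?thesis using \<open>g > 0\<close> by simp
qed

lemma ortho_plane_20:
  fixes B :: "'a::euclidean_space \<Rightarrow> 'a \<Rightarrow> real"
  assumes B: "sbf B" and o: "B e1 e2 = 0" and g1: "B e1 e1 < 0" and g2: "B e2 e2 < 0"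
  shows "plane_of_type B 2 0 e1 e2"
proof -
  have g1': "B e1 e1 \<noteq> 0" and g2': "B e2 e2 \<noteq> 0" using g1 g2 by auto
  note C = ortho_plane_common[OF B o g1' g2']
  have c1: "dim (span {e1, e2}) = 2" using C g1 g2 by simp
  have c2: "\<forall>x\<in>span {e1, e2}. (\<forall>y\<in>span {e1, e2}. B x y = 0) \<longrightarrow> x = 0" using C g1 g2 by simp
  have neg: "B w w < 0" if wS: "w \<in> span {e1, e2}" and wnz: "w \<noteq> 0" for w
  proof -
    obtain s t where st: "w = s *\<^sub>R e1 + t *\<^sub>R e2" "B w w = s * s * B e1 e1 + t * t * B e2 e2"
      using C(3)[OF wS] by blast
    have "s \<noteq> 0 \<or> t \<noteq> 0" using st wnz by auto
    moreover have "s * s * B e1 e1 \<le> 0" "t * t * B e2 e2 \<le> 0" using g1 g2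
      by (simp_all add: mult_nonneg_nonpos)
    moreover have "s \<noteq> 0 \<Longrightarrow> s * s * B e1 e1 < 0" using g1 sq_neg by blast
    moreover have "t \<noteq> 0 \<Longrightarrow> t * t * B e2 e2 < 0" using g2 sq_neg by blast
    ultimately show ?thesis using st by linarith
  qed
  show ?thesis unfolding plane_of_type_def signature_on_def
  proof (intro conjI c1 c2 allI impI)
    show "\<exists>N\<subseteq>span {e1, e2}. neg_def_subspace B N \<and> dim N = 2"
      using neg c1 by (intro exI[of _ "span {e1, e2}"]) (auto simp: neg_def_subspace_def)
    show "dim N \<le> 2" if "N \<subseteq> span {e1, e2} \<and> neg_def_subspace B N" for N
      using that dim_subset[of N "span {e1, e2}"] c1 by simp
    show "\<exists>P\<subseteq>span {e1, e2}. pos_def_subspace B P \<and> dim P = 0"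
      by (intro exI[of _ "{0}"]) (auto simp: pos_def_subspace_def subspace_0 span_zero)
    show "dim P \<le> 0" if "P \<subseteq> span {e1, e2} \<and> pos_def_subspace B P" for P
    proof -
      have "P \<subseteq> {0}" using that neg unfolding pos_def_subspace_def by force
      then show ?thesis by simp
    qed
  qed
qed

lemma ortho_plane_11:
  fixes B :: "'a::euclidean_space \<Rightarrow> 'a \<Rightarrow> real"
  assumes B: "sbf B" and o: "B e1 e2 = 0" and g1: "B e1 e1 < 0" and g2: "B e2 e2 > 0"
  shows "plane_of_type B 1 1 e1 e2"
proof -
  have g1': "B e1 e1 \<noteq> 0" and g2': "B e2 e2 \<noteq> 0" using g1 g2 by auto
  note C = ortho_plane_common[OF B o g1' g2']
  have c1: "dim (span {e1, e2}) = 2" using C g1 g2 by simp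
  have c2: "\<forall>x\<in>span {e1, e2}. (\<forall>y\<in>span {e1, e2}. B x y = 0) \<longrightarrow> x = 0" using C g1 g2 by simp
  have n1: "e1 \<noteq> 0" and n2: "e2 \<noteq> 0" using C g1 g2 by auto
  note simps = sbf_simps[OF B]
  have in1: "e1 \<in> span {e1, e2}" and in2: "e2 \<in> span {e1, e2}" by (auto intro: span_base)
  show ?thesis unfolding plane_of_type_def signature_on_def
  proof (intro conjI c1 c2 allI impI)
    show "\<exists>N\<subseteq>span {e1, e2}. neg_def_subspace B N \<and> dim N = 1"
    proof (intro exI[of _ "span {e1}"] conjI)
      show "span {e1} \<subseteq> span {e1, e2}" by (rule span_mono) auto
      show "dim (span {e1}) = 1" using n1 by simp
      show "neg_def_subspace B (span {e1})" unfolding neg_def_subspace_def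
      proof (intro conjI ballI impI)
        show "subspace (span {e1})" by simp
        fix x assume "x \<in> span {e1}" "x \<noteq> 0"
        then obtain t where "x = t *\<^sub>R e1" "t \<noteq> 0" using span1_mem by force
        moreover have "B x x = t * t * B e1 e1" using \<open>x = t *\<^sub>R e1\<close> by (simp add: simps)
        ultimately show "B x x < 0" using g1 sq_neg by simp
      qed
    qed
    show "\<exists>P\<subseteq>span {e1, e2}. pos_def_subspace B P \<and> dim P = 1"
    proof (intro exI[of _ "span {e2}"] conjI)
      show "span {e2} \<subseteq> span {e1, e2}" by (rule span_mono) auto
      show "dim (span {e2}) = 1" using n2 by simp
      show "pos_def_subspace B (span {e2})" unfolding pos_def_subspace_def
      proof (intro conjI ballI impI)
        show "subspace (span {e2})" by simp
        fix x assume "x \<in> span {e2}" "x \<noteq> 0"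
        then obtain t where "x = t *\<^sub>R e2" "t \<noteq> 0" using span1_mem by force
        moreover have "B x x = t * t * B e2 e2" using \<open>x = t *\<^sub>R e2\<close> by (simp add: simps)
        ultimately show "B x x > 0" using g2 sq_pos by simp
      qed
    qed
    show "dim N \<le> 1" if "N \<subseteq> span {e1, e2} \<and> neg_def_subspace B N" for N
      using that sub_dim_le1[of N e1 e2 e2] c1 in2 g2 n2 unfolding neg_def_subspace_def by force
    show "dim P \<le> 1" if "P \<subseteq> span {e1, e2} \<and> pos_def_subspace B P" for P
      using that sub_dim_le1[of P e1 e2 e1] c1 in1 g1 n1 unfolding pos_def_subspace_def by force
  qed
qed

lemma flip_indep:
  fixes C :: "'a::euclidean_space \<Rightarrow> 'a \<Rightarrow> real"
  assumes C: "sbf C" and lf: "linear f" and d2: "dim (span {x, y}) = 2"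
    and pd: "\<forall>w\<in>span {x, y}. w \<noteq> 0 \<longrightarrow> C w w > 0"
    and fl: "\<forall>w. C (f w) (f w) \<le> - C w w"
  shows "indep4 x y (f x) (f y)"
  unfolding indep4_def
proof (intro allI impI)
  fix a b c d assume rel: "a *\<^sub>R x + b *\<^sub>R y + c *\<^sub>R f x + d *\<^sub>R f y = 0"
  define w1 where "w1 = a *\<^sub>R x + b *\<^sub>R y"
  define w2 where "w2 = c *\<^sub>R x + d *\<^sub>R y"
  have fw2: "f w2 = c *\<^sub>R f x + d *\<^sub>R f y" unfolding w2_def by (simp add: linear_add[OF lf] linear_scale[OF lf])
  have w1: "w1 = - f w2" using rel unfolding w1_def fw2 by (simp add: algebra_simps eq_neg_iff_add_eq_0)
  have in1: "w1 \<in> span {x, y}" and in2: "w2 \<in> span {x, y}" unfolding w1_def w2_def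
    by (intro span_add span_scale span_base; simp)+
  have "w2 = 0"
  proof (rule ccontr)
    assume "w2 \<noteq> 0"
    then have "C w2 w2 > 0" using pd in2 by blast
    then have "C (f w2) (f w2) < 0" using fl by (metis neg_less_0_iff_less order_le_less_trans)
    then have "C w1 w1 < 0" unfolding w1 by (simp add: sbf_simps[OF C])
    moreover have "C w1 w1 \<ge> 0" using pd in1 by (cases "w1 = 0") (auto simp: sbf_simps[OF C] less_imp_le)
    ultimately show False by simp
  qed
  then have cd: "c = 0 \<and> d = 0" using coef2[OF d2] unfolding w2_def by blast
  then have "w1 = 0" using w1 \<open>w2 = 0\<close> by (simp add: linear_0[OF lf])
  then have "a = 0 \<and> b = 0" using coef2[OF d2] unfolding w1_def by blast
  then show "a = 0 \<and> b = 0 \<and> c = 0 \<and> d = 0" using cd by simp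
qed

lemma diag_indep4:
  fixes B :: "'a::real_vector \<Rightarrow> 'a \<Rightarrow> real"
  assumes B: "sbf B"
    and o: "B x y = 0" "B x u = 0" "B x v = 0" "B y u = 0" "B y v = 0" "B u v = 0"
    and nz: "B x x \<noteq> 0" "B y y \<noteq> 0" "B u u \<noteq> 0" "B v v \<noteq> 0"
  shows "indep4 x y u v"
  unfolding indep4_def
proof (intro allI impI)
  fix a b c d assume rel: "a *\<^sub>R x + b *\<^sub>R y + c *\<^sub>R u + d *\<^sub>R v = 0"
  have o': "B y x = 0" "B u x = 0" "B v x = 0" "B u y = 0" "B v y = 0" "B v u = 0"
    using o sbf_sym[OF B] by metis+
  note simps = sbf_simps[OF B]
  have "B (a *\<^sub>R x + b *\<^sub>R y + c *\<^sub>R u + d *\<^sub>R v) x = 0" 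
       "B (a *\<^sub>R x + b *\<^sub>R y + c *\<^sub>R u + d *\<^sub>R v) y = 0"
       "B (a *\<^sub>R x + b *\<^sub>R y + c *\<^sub>R u + d *\<^sub>R v) u = 0"
       "B (a *\<^sub>R x + b *\<^sub>R y + c *\<^sub>R u + d *\<^sub>R v) v = 0"
    unfolding rel by (simp_all add: simps)
  then show "a = 0 \<and> b = 0 \<and> c = 0 \<and> d = 0" using o o' nz by (simp add: simps)
qed

lemma pos_def_pdef: "pos_def_subspace B S \<longleftrightarrow> pdef B S"
  by (simp add: pos_def_subspace_def pdef_def)

lemma neg_def_pdef: "neg_def_subspace B S \<longleftrightarrow> pdef (\<lambda>x y. - B x y) S"
  by (simp add: neg_def_subspace_def pdef_def)

lemma extend_family:
  fixes C :: "'a::euclidean_space \<Rightarrow> 'a \<Rightarrow> real" and n :: nat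
  assumes C: "sbf C" and vv: "\<forall>i<n. \<forall>j<n. C (v i) (v j) = (if i = j then 1 else 0)"
    and u: "\<forall>i<n. C u (v i) = 0" "C u u > 0"
  shows "pdef C (span ((v(n := u)) ` {..<Suc n})) \<and> dim ((v(n := u)) ` {..<Suc n}) = Suc n"
proof (rule orthfam[OF C])
  have u': "\<forall>i<n. C (v i) u = 0" using u(1) sbf_sym[OF C] by metis
  show "\<forall>i<Suc n. \<forall>j<Suc n. i \<noteq> j \<longrightarrow> C ((v(n := u)) i) ((v(n := u)) j) = 0"
    using vv u u' by (auto simp: less_Suc_eq)
  show "\<forall>i<Suc n. 0 < C ((v(n := u)) i) ((v(n := u)) i)"
    using vv u by (auto simp: less_Suc_eq)
qed

lemma setup_basis:
  fixes B :: "'a::euclidean_space \<Rightarrow> 'a \<Rightarrow> real" and p q :: nat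
  assumes sig: "inner_product_sig B p q"
  obtains v a where
    "\<forall>i<q. \<forall>j<q. B (v i) (v j) = (if i = j then 1 else 0)"
    "\<forall>i<p. \<forall>j<p. B (a i) (a j) = (if i = j then -1 else 0)"
    "\<forall>i<q. \<forall>j<p. B (v i) (a j) = 0"
    "\<forall>u. (\<forall>i<q. B u (v i) = 0) \<longrightarrow> B u u \<le> 0"
    "\<forall>u. (\<forall>i<p. B u (a i) = 0) \<longrightarrow> B u u \<ge> 0"
proof -
  have B: "sbf B" using sig by (simp add: inner_product_sig_def sbf_B)
  note simps = sbf_simps[OF B]
  have nB: "sbf (\<lambda>x y. - B x y)" using sbf_neg[OF B] .
  note S = sig[unfolded inner_product_sig_def signature_on_def]
  obtain P where P: "pos_def_subspace B P" "dim P = q" using S by blast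
  obtain N where N: "neg_def_subspace B N" "dim N = p" using S by blast
  have maxP: "\<And>P. pos_def_subspace B P \<Longrightarrow> dim P \<le> q" using S by blast
  have maxN: "\<And>N. neg_def_subspace B N \<Longrightarrow> dim N \<le> p" using S by blast
  obtain v where v: "\<forall>i<q. v i \<in> P" and vv: "\<forall>i<q. \<forall>j<q. B (v i) (v j) = (if i = j then 1 else 0)"
    using gram_schmidt_C[OF B, of P q] P by (auto simp: pos_def_pdef)
  have mxv: "\<forall>u. (\<forall>i<q. B u (v i) = 0) \<longrightarrow> B u u \<le> 0"
  proof (intro allI impI)
    fix u assume u: "\<forall>i<q. B u (v i) = 0"
    show "B u u \<le> 0"
    proof (rule ccontr)
      assume "\<not> B u u \<le> 0"
      then have "B u u > 0" by simp
      from extend_family[OF B vv u this] have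
        "pos_def_subspace B (span ((v(q := u)) ` {..<Suc q}))" "dim ((v(q := u)) ` {..<Suc q}) = Suc q"
        by (auto simp: pos_def_pdef)
      then show False using maxP by fastforce
    qed
  qed
  define pr where "pr x = x - (\<Sum>i<q. B x (v i) *\<^sub>R v i)" for x
  have lpr: "linear pr"
    by (rule linearI) (simp_all add: pr_def simps scaleR_add_left sum.distrib scaleR_sum_right algebra_simps)
  have prv: "B (pr x) (v j) = 0" if "j < q" for x j
  proof -
    have "B (\<Sum>i<q. B x (v i) *\<^sub>R v i) (v j) = (\<Sum>i<q. B x (v i) * B (v i) (v j))" by (simp add: sumC1[OF B])
    also have "\<dots> = (\<Sum>i<q. if i = j then B x (v i) else 0)" using vv that by (intro sum.cong) auto
    also have "\<dots> = B x (v j)" using that by (subst sum.delta) simp_all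
    finally show ?thesis by (simp add: pr_def simps)
  qed
  have prn: "B (pr x) (pr x) = B x x - (\<Sum>i<q. B x (v i) * B x (v i))" for x
  proof -
    define sb where "sb = (\<Sum>i<q. B x (v i) * B x (v i))"
    define Px where "Px = (\<Sum>i<q. B x (v i) *\<^sub>R v i)"
    have 1: "B Px Px = sb" unfolding Px_def sb_def using sumC[OF B vv] by simp
    have 2: "B x Px = sb" unfolding Px_def sb_def by (simp add: sumC1[OF B])
    have 3: "B Px x = sb" using 2 sbf_sym[OF B] by metis
    show ?thesis unfolding pr_def Px_def[symmetric] sb_def[symmetric] simps(5,6) 1 2 3 by simp
  qed
  have prneg: "B (pr x) (pr x) < 0" if "x \<in> N" "x \<noteq> 0" for x
  proof -
    have "B x x < 0" using N(1) that by (simp add: neg_def_subspace_def)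
    moreover have "(\<Sum>i<q. B x (v i) * B x (v i)) \<ge> 0" by (intro sum_nonneg) simp
    ultimately show ?thesis using prn[of x] by linarith
  qed
  define Q where "Q = pr ` N"
  have subN: "subspace N" using N(1) by (simp add: neg_def_subspace_def)
  have pdQ: "pdef (\<lambda>x y. - B x y) Q" unfolding pdef_def
  proof (intro conjI ballI impI)
    show "subspace Q" unfolding Q_def using linear_subspace_image[OF lpr subN] .
    fix u assume "u \<in> Q" "u \<noteq> 0"
    then obtain x where x: "x \<in> N" "u = pr x" by (auto simp: Q_def)
    then have "x \<noteq> 0" using \<open>u \<noteq> 0\<close> linear_0[OF lpr] by auto
    then show "0 < - B u u" using prneg x by simp
  qed
  have inj: "inj_on pr (span N)"
  proof -
    have spN: "span N = N" using subN by (simp add: span_eq_iff)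
    show ?thesis unfolding spN inj_on_def
    proof (intro ballI impI)
      fix x y assume xy: "x \<in> N" "y \<in> N" "pr x = pr y"
      then have "pr (x - y) = 0" by (simp add: linear_diff[OF lpr])
      moreover have "x - y \<in> N" using subN xy by (simp add: subspace_diff)
      ultimately show "x = y" using prneg[of "x - y"] simps by fastforce
    qed
  qed
  have dQ: "dim Q = p" unfolding Q_def using dim_image_eq[OF lpr inj] N(2) by simp
  obtain a where a: "\<forall>i<p. a i \<in> Q" and aa0: "\<forall>i<p. \<forall>j<p. - B (a i) (a j) = (if i = j then 1 else 0)"
    using gram_schmidt_C[OF nB pdQ dQ] by blast
  have aa: "\<forall>i<p. \<forall>j<p. B (a i) (a j) = (if i = j then -1 else 0)"
    using aa0 by (metis add.inverse_neutral minus_equation_iff)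
  have va: "\<forall>i<q. \<forall>j<p. B (v i) (a j) = 0"
  proof (intro allI impI)
    fix i j assume ij: "i < q" "j < p"
    then obtain x where "a j = pr x" using a by (auto simp: Q_def)
    then have "B (a j) (v i) = 0" using prv ij by simp
    then show "B (v i) (a j) = 0" using sbf_sym[OF B] by metis
  qed
  have mxa: "\<forall>u. (\<forall>i<p. B u (a i) = 0) \<longrightarrow> B u u \<ge> 0"
  proof (intro allI impI)
    fix u assume u: "\<forall>i<p. B u (a i) = 0"
    show "B u u \<ge> 0"
    proof (rule ccontr)
      assume "\<not> B u u \<ge> 0"
      then have "- B u u > 0" by simp
      from extend_family[OF nB aa0 _ this] u have
        "neg_def_subspace B (span ((a(p := u)) ` {..<Suc p}))" "dim ((a(p := u)) ` {..<Suc p}) = Suc p"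
        by (auto simp: neg_def_pdef)
      then show False using maxN by fastforce
    qed
  qed
  show ?thesis using that vv aa va mxv mxa by blast
qed

lemma phi_lin: "sbf C \<Longrightarrow> linear (phiC C v a k)"
  by (rule linearI) (simp_all add: phiC_def sbf_simps scaleR_add_left sum.distrib scaleR_sum_right algebra_simps)

lemma phi_sa:
  assumes C: "sbf C"
  shows "C (phiC C v a k x) y = C x (phiC C v a k y)"
proof -
  have "C (phiC C v a k x) y = (\<Sum>i<k. C x (v i) * C (a i) y) + (\<Sum>i<k. C x (a i) * C (v i) y)"
    by (simp add: phiC_def sbf_simps[OF C])
  also have "\<dots> = (\<Sum>i<k. C y (a i) * C x (v i)) + (\<Sum>i<k. C y (v i) * C x (a i))"
    using sbf_sym[OF C] by (simp add: mult.commute)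
  also have "\<dots> = C x (phiC C v a k y)"
    by (simp add: phiC_def sbf_simps[OF C] add.commute)
  finally show ?thesis .
qed

lemma phi_neg: "phiC (\<lambda>x y. - C x y) a v k w = - phiC C v a k w"
  by (simp add: phiC_def sum_negf add.commute)

lemma phi_v:
  assumes "\<forall>i<k. C (v j) (v i) = (if j = i then 1 else 0)" "\<forall>i<k. C (v j) (a i) = 0" "j < k"
  shows "phiC C v a k (v j) = a j"
proof -
  have "(\<Sum>i<k. C (v j) (v i) *\<^sub>R a i) = (\<Sum>i<k. if j = i then a i else 0)"
    using assms(1) by (intro sum.cong) auto
  also have "\<dots> = a j" using assms(3) by (subst sum.delta') simp_all
  finally show ?thesis using assms(2) by (simp add: phiC_def)
qed

lemma phi_a:
  assumes "\<forall>i<k. C (a j) (a i) = (if j = i then -1 else 0)" "\<forall>i<k. C (a j) (v i) = 0" "j < k"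
  shows "phiC C v a k (a j) = - v j"
proof -
  have "(\<Sum>i<k. C (a j) (a i) *\<^sub>R v i) = (\<Sum>i<k. if j = i then - v i else 0)"
    using assms(1) by (intro sum.cong) auto
  also have "\<dots> = - v j" using assms(3) by (subst sum.delta') simp_all
  finally show ?thesis using assms(2) by (simp add: phiC_def)
qed

lemma phi_zero:
  assumes "\<forall>i<k. C c (v i) = 0" "\<forall>i<k. C c (a i) = 0"
  shows "phiC C v a k c = 0"
  using assms by (simp add: phiC_def)

lemma op_rank_Rt:
  fixes B :: "'a::euclidean_space \<Rightarrow> 'a \<Rightarrow> real"
  assumes B: "sbf B" and nd: "\<forall>x. (\<forall>y. B x y = 0) \<longrightarrow> x = 0"
  shows "op_rank (plane_op B (Rt B f) e1 e2) =
    dim (range (\<lambda>z. (\<bar>B e1 e1 * B e2 e2 - (B e1 e2)^2\<bar> powr (-1/2)) *\<^sub>R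
       (B e2 z *\<^sub>R e1 - B e1 z *\<^sub>R e2 + B (f e2) z *\<^sub>R f e1 - B (f e1) z *\<^sub>R f e2)))"
  unfolding op_rank_def plane_op_def curv_Rt[OF B nd] ..

lemma rank4_plane:
  fixes B :: "'a::euclidean_space \<Rightarrow> 'a \<Rightarrow> real"
  assumes B: "sbf B" and nd: "\<forall>x. (\<forall>y. B x y = 0) \<longrightarrow> x = 0"
    and pl: "plane_of_type B r s e1 e2" and I: "indep4 e1 e2 (f e1) (f e2)"
  shows "op_rank (plane_op B (Rt B f) e1 e2) = 4"
proof -
  have "\<bar>B e1 e1 * B e2 e2 - (B e1 e2)^2\<bar> powr (-1/2) \<noteq> 0"
    using plane_det[OF B pl] by simp
  then show ?thesis unfolding op_rank_Rt[OF B nd] using rank_eq4[OF B nd _ I] by blast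
qed

lemma rank3_plane:
  fixes B :: "'a::euclidean_space \<Rightarrow> 'a \<Rightarrow> real"
  assumes B: "sbf B" and nd: "\<forall>x. (\<forall>y. B x y = 0) \<longrightarrow> x = 0"
    and D: "f e1 \<in> span {e1, e2, f e2} \<or> f e2 \<in> span {e1, e2, f e1}"
  shows "op_rank (plane_op B (Rt B f) e1 e2) \<le> 3"
  unfolding op_rank_Rt[OF B nd] using rank_le3[OF D] by blast

theorem lemma2p3:
  fixes B :: "'a::euclidean_space \<Rightarrow> 'a \<Rightarrow> real" and p q :: nat
  assumes "inner_product_sig B p q" and "p \<ge> q" and "q \<ge> 2"
  shows "(p = q \<longrightarrow> (\<exists>R. alg_curv_tensor R \<and> spacelike_rank B R 4 \<and> timelike_rank B R 4
                        \<and> \<not> const_mixed_rank B R))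
       \<and> (p > q \<longrightarrow> (\<exists>R. alg_curv_tensor R \<and> spacelike_rank B R 4
                        \<and> \<not> const_timelike_rank B R \<and> \<not> mixed_rank B R 4))"
proof -
  have B: "sbf B" using assms(1) by (simp add: inner_product_sig_def sbf_B)
  have nB: "sbf (\<lambda>x y. - B x y)" using sbf_neg[OF B] .
  have nd: "\<forall>x. (\<forall>y. B x y = 0) \<longrightarrow> x = 0"
    using assms(1) by (simp add: inner_product_sig_def signature_on_def)
  obtain v a where vv: "\<forall>i<q. \<forall>j<q. B (v i) (v j) = (if i = j then 1 else 0)"
    and aa: "\<forall>i<p. \<forall>j<p. B (a i) (a j) = (if i = j then -1 else 0)"
    and va: "\<forall>i<q. \<forall>j<p. B (v i) (a j) = 0"
    and mxv: "\<forall>u. (\<forall>i<q. B u (v i) = 0) \<longrightarrow> B u u \<le> 0"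
    and mxa: "\<forall>u. (\<forall>i<p. B u (a i) = 0) \<longrightarrow> B u u \<ge> 0"
    using setup_basis[OF assms(1)] by blast
  have av: "\<forall>i<p. \<forall>j<q. B (a i) (v j) = 0" using va sbf_sym[OF B] by metis
  have aaq: "\<forall>i<q. \<forall>j<q. B (a i) (a j) = (if i = j then -1 else 0)" using aa assms(2) by auto
  have vaq: "\<forall>i<q. \<forall>j<q. B (v i) (a j) = 0" using va assms(2) by auto
  define f where "f = phiC B v a q"
  have lf: "linear f" unfolding f_def using phi_lin[OF B] .
  have sa: "\<forall>x y. B (f x) y = B x (f y)" unfolding f_def using phi_sa[OF B] by blast
  have key: "\<forall>w. B (f w) (f w) \<le> - B w w"
    unfolding f_def using key_ineq[OF B vv aaq vaq mxv] by blast
  define R where "R = Rt B f"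
  have acs: "alg_curv_tensor R" unfolding R_def using Rt_acs[OF B lf sa] .
  have fv: "f (v j) = a j" if "j < q" for j
    unfolding f_def using that vv vaq by (intro phi_v) auto
  have fa: "f (a j) = - v j" if "j < q" for j
    unfolding f_def using that aaq av assms(2) by (intro phi_a) auto
  have space: "spacelike_rank B R 4"
    unfolding spacelike_rank_def rank_on_planes_def
  proof (intro allI impI)
    fix e1 e2 assume pl: "plane_of_type B 0 2 e1 e2"
    have "indep4 e1 e2 (f e1) (f e2)"
      using flip_indep[OF B lf _ plane_def_pos[OF pl] key] pl by (simp add: plane_of_type_def)
    then show "op_rank (plane_op B R e1 e2) = 4" unfolding R_def using rank4_plane[OF B nd pl] by blast
  qed
  have q0: "0 < q" "1 < q" using assms(3) by auto
  have Bv: "B (v 0) (v 0) = 1" "B (v 1) (v 1) = 1" "B (v 0) (v 1) = 0" "B (v 1) (v 0) = 0"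
    using vv q0 by auto
  have Ba: "B (a 0) (a 0) = -1" "B (a 1) (a 1) = -1" "B (a 0) (a 1) = 0" "B (a 1) (a 0) = 0"
    using aaq q0 by auto
  have Bva: "B (v i) (a j) = 0" "B (a j) (v i) = 0" if "i < q" "j < q" for i j
    using vaq av that assms(2) by auto
  note simps = sbf_simps[OF B]
  have pl00: "plane_of_type B 1 1 (a 0) (v 0)"
    using ortho_plane_11[OF B] Bv Ba Bva[of 0 0] q0 by simp
  have r00: "op_rank (plane_op B R (a 0) (v 0)) \<le> 3"
    unfolding R_def
  proof (rule rank3_plane[OF B nd])
    have "f (a 0) = - v 0" using fa q0 by simp
    then show "f (a 0) \<in> span {a 0, v 0, f (v 0)} \<or> f (v 0) \<in> span {a 0, v 0, f (a 0)}"
      by (auto intro: span_neg span_base)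
  qed
  show ?thesis
  proof (intro conjI impI)
    assume pq: "p = q"
    have key2: "\<forall>w. - B (f w) (f w) \<le> - (- B w w)"
    proof
      fix w
      have aa': "\<forall>i<q. \<forall>j<q. - B (a i) (a j) = (if i = j then 1 else 0)" using aaq by auto
      have vv': "\<forall>i<q. \<forall>j<q. - B (v i) (v j) = (if i = j then -1 else 0)" using vv by auto
      have av': "\<forall>i<q. \<forall>j<q. - B (a i) (v j) = 0" using av assms(2) by auto
      have mx': "\<forall>u. (\<forall>i<q. - B u (a i) = 0) \<longrightarrow> - B u u \<le> 0" using mxa pq by auto
      have "- B (phiC (\<lambda>x y. - B x y) a v q w) (phiC (\<lambda>x y. - B x y) a v q w) \<le> - (- B w w)"
        using key_ineq[OF nB aa' vv' av' mx'] by blast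
      then show "- B (f w) (f w) \<le> - (- B w w)" unfolding f_def phi_neg by (simp add: simps)
    qed
    have time: "timelike_rank B R 4"
      unfolding timelike_rank_def rank_on_planes_def
    proof (intro allI impI)
      fix e1 e2 assume pl: "plane_of_type B 2 0 e1 e2"
      have pd: "\<forall>w\<in>span {e1, e2}. w \<noteq> 0 \<longrightarrow> - B w w > 0" using plane_def_neg[OF pl] by auto
      have "indep4 e1 e2 (f e1) (f e2)"
        using flip_indep[OF nB lf _ pd key2] pl by (simp add: plane_of_type_def)
      then show "op_rank (plane_op B R e1 e2) = 4" unfolding R_def using rank4_plane[OF B nd pl] by blast
    qed
    have pl01: "plane_of_type B 1 1 (a 0) (v 1)"
      using ortho_plane_11[OF B] Bv Ba Bva[of 1 0] q0 by simp
    have r01: "op_rank (plane_op B R (a 0) (v 1)) = 4"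
      unfolding R_def
    proof (rule rank4_plane[OF B nd pl01])
      have "indep4 (a 0) (v 1) (- v 0) (a 1)"
        using diag_indep4[OF B] Bv Ba Bva[of 0 0] Bva[of 1 0] Bva[of 0 1] Bva[of 1 1] q0
        by (simp add: simps)
      then show "indep4 (a 0) (v 1) (f (a 0)) (f (v 1))" using fa fv q0 by simp
    qed
    have "\<not> const_mixed_rank B R"
      unfolding const_mixed_rank_def mixed_rank_def rank_on_planes_def
      using pl00 pl01 r00 r01 by (metis numeral_le_iff semiring_norm(69) semiring_norm(72) le_numeral_extra(4))
    then show "\<exists>R. alg_curv_tensor R \<and> spacelike_rank B R 4 \<and> timelike_rank B R 4 \<and> \<not> const_mixed_rank B R"
      using acs space time by blast
  next
    assume pq: "q < p"
    have Baq: "B (a 0) (a q) = 0" "B (a q) (a q) = -1" using aa pq q0 by auto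
    have plt1: "plane_of_type B 2 0 (a 0) (a 1)"
      using ortho_plane_20[OF B] Ba by simp
    have plt2: "plane_of_type B 2 0 (a 0) (a q)"
      using ortho_plane_20[OF B] Ba Baq by simp
    have rt1: "op_rank (plane_op B R (a 0) (a 1)) = 4"
      unfolding R_def
    proof (rule rank4_plane[OF B nd plt1])
      have "indep4 (a 0) (a 1) (- v 0) (- v 1)"
        using diag_indep4[OF B] Bv Ba Bva[of 0 0] Bva[of 1 0] Bva[of 0 1] Bva[of 1 1] q0
        by (simp add: simps)
      then show "indep4 (a 0) (a 1) (f (a 0)) (f (a 1))" using fa q0 by simp
    qed
    have faq: "f (a q) = 0" unfolding f_def
      using av pq aa by (intro phi_zero) auto
    have rt2: "op_rank (plane_op B R (a 0) (a q)) \<le> 3"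
      unfolding R_def
      by (rule rank3_plane[OF B nd]) (simp add: faq span_zero)
    have "\<not> const_timelike_rank B R"
      unfolding const_timelike_rank_def timelike_rank_def rank_on_planes_def
      using plt1 plt2 rt1 rt2 by (metis numeral_le_iff semiring_norm(69) semiring_norm(72) le_numeral_extra(4))
    moreover have "\<not> mixed_rank B R 4"
      unfolding mixed_rank_def rank_on_planes_def using pl00 r00 by fastforce
    ultimately show "\<exists>R. alg_curv_tensor R \<and> spacelike_rank B R 4 \<and> \<not> const_timelike_rank B R \<and> \<not> mixed_rank B R 4"
      using acs space by blast
  qed
qed

end
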